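(* For every $n\ge1$, $$\text{(a)}\quad r_nx_1=q^{1/2}s_ny_1+r_{n-1}x_2,\qquad\text{(b)}\quad x_2s_n=r_{n-1}+q^{-1/2}M[1,0,1,1]\,s_{n-1}.$$
   Context: Based quantum torus: basis $M[a]$, $a\in\mathbb{Z}^4$, $M[a]M[b]=q^{\frac12a^T\Lambda b}M[a+b]$ with $\Lambda=\begin{pmatrix}0&0&-1&0\\0&0&0&-1\\1&0&0&-2\\0&1&2&0\end{pmatrix}$; $x_1=M[e_1],x_2=M[e_2],y_1=M[e_3],y_2=M[e_4]$. Snake graphs: for $n\ge0$, $\mathcal G_n$ is a horizontal row of $2n+1$ unit square tiles $G_{-n},\dots,G_n$ (left to right, consecutive tiles sharing a vertical edge); $G_i$ has face weight $1$ if $i+n$ is even and face weight $2$ if $i+n$ is odd. The top and bottom edges of a tile of face weight $1$ have edge weight $2$; the top and bottom edges of a tile of face weight $2$ have edge weight $1$; vertical edges carry no weight. $\mathcal H_n$ is obtained from $\mathcal G_n$ by deleting the rightmost tile $G_n$ (keeping the tiles $H_i:=G_i$, $-n\le i\le n-1$, and their edges); $\mathcal H_0$ is a single vertical edge. The minimal perfect matching $P_{min}$ of $\mathcal G_n$ consists of the top and bottom edges of all tiles of face weight $1$; that of $\mathcal H_n$ ($n\ge1$) consists of the top and bottom edges of its tiles of face weight $1$ together with its rightmost vertical edge. For a perfect matching $P$, $\mathrm{Twist}(P)$ is the set of tiles in the interior of cycles of $P\triangle P_{min}$, $y_i(P)$ the number of twisted tiles of face weight $i$, and $a_i(P)$ the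 number of edges of $P$ of edge weight $i$. Set $\nu(P)=(a_1(P)-N_1,\,a_2(P)-N_2,\,y_1(P),\,y_2(P))\in\mathbb{Z}^4$, where $N_i$ is the number of tiles of face weight $i$ (for $\mathcal G_n$: $N_1=n+1,N_2=n$; for $\mathcal H_n$: $N_1=N_2=n$). Tile exponents: in $\mathcal G_n$, $\alpha(G_i)=i/2$ if $G_i$ has face weight $1$ and $-i/2$ if weight $2$; in $\mathcal H_n$, $\alpha(H_i)=(i+1)/2$ if $H_i$ has face weight $1$ and $-i/2$ if weight $2$. $\alpha(P)=\sum_{G\in\mathrm{Twist}(P)}\alpha(G)$. Finally $r_n=\sum_{P\models\mathcal G_n}q^{\alpha(P)}M[\nu(P)]$ and $s_n=\sum_{P\models\mathcal H_n}q^{\alpha(P)}M[\nu(P)]$ (sums over perfect matchings). *)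

theory Defs
  imports Main "HOL-Library.Multiset"
begin

text \<open>A monomial q^(k/2) M[a] (a in Z^4) is encoded as the pair (k, a).
  Every element occurring in the theorem is a sum of such monomials with
  coefficient 1, so elements are represented by multisets of monomials; since
  the monomials q^(k/2) M[a] form a Z-basis of the quantum torus over
  Z[q^(1/2), q^(-1/2)], equality of multisets is exactly equality in the torus.\<close>

type_synonym vec4 = "int \<times> int \<times> int \<times> int"
type_synonym qmono = "int \<times> vec4"

text \<open>a^T Lambda b for the given matrix Lambda.\<close>
fun lam :: "vec4 \<Rightarrow> vec4 \<Rightarrow> int" where
  "lam (a1, a2, a3, a4) (b1, b2, b3, b4) =
     - a1 * b3 - a2 * b4 + a3 * b1 - 2 * a3 * b4 + a4 * b2 + 2 * a4 * b3"

fun vadd :: "vec4 \<Rightarrow> vec4 \<Rightarrow> vec4" where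
  "vadd (a1, a2, a3, a4) (b1, b2, b3, b4) = (a1 + b1, a2 + b2, a3 + b3, a4 + b4)"

text \<open>(q^(k/2) M[a]) (q^(l/2) M[b]) = q^((k + l + a^T Lambda b)/2) M[a+b].\<close>
definition mono_mult :: "qmono \<Rightarrow> qmono \<Rightarrow> qmono" where
  "mono_mult x y = (fst x + fst y + lam (snd x) (snd y), vadd (snd x) (snd y))"

definition qmult :: "qmono multiset \<Rightarrow> qmono multiset \<Rightarrow> qmono multiset" where
  "qmult A B = (\<Sum>x\<in>#A. image_mset (mono_mult x) B)"

definition qM :: "int \<Rightarrow> vec4 \<Rightarrow> qmono multiset" where
  "qM k a = {#(k, a)#}"

definition X1 :: "qmono multiset" where "X1 = qM 0 (1, 0, 0, 0)"
definition X2 :: "qmono multiset" where "X2 = qM 0 (0, 1, 0, 0)"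
definition Y1 :: "qmono multiset" where "Y1 = qM 0 (0, 0, 1, 0)"
definition Y2 :: "qmono multiset" where "Y2 = qM 0 (0, 0, 0, 1)"

text \<open>Vertices are lattice points (x,y), x \<le> m, y \<in> {0,1}; tile j (j < m) is the
  square [j,j+1] x [0,1].  G_n is the row with m = 2n+1 tiles, tile j being
  G_(j-n); H_n is the row with m = 2n tiles, tile j being H_(j-n)
  (for n = 0 this is the single vertical edge).  Face weight of tile j is 1
  iff j is even (i.e. i+n even for i = j-n).\<close>

type_synonym vert = "nat \<times> nat"

definition bot_edge :: "nat \<Rightarrow> vert set" where "bot_edge j = {(j, 0), (Suc j, 0)}"
definition top_edge :: "nat \<Rightarrow> vert set" where "top_edge j = {(j, 1), (Suc j, 1)}"
definition vert_edge :: "nat \<Rightarrow> vert set" where "vert_edge x = {(x, 0), (x, 1)}"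

definition row_verts :: "nat \<Rightarrow> vert set" where
  "row_verts m = {(x, y). x \<le> m \<and> y \<le> 1}"

definition row_edges :: "nat \<Rightarrow> vert set set" where
  "row_edges m = bot_edge ` {..<m} \<union> top_edge ` {..<m} \<union> vert_edge ` {..m}"

definition perfect_matching :: "nat \<Rightarrow> vert set set \<Rightarrow> bool" where
  "perfect_matching m P \<longleftrightarrow> P \<subseteq> row_edges m \<and> (\<forall>v\<in>row_verts m. \<exists>!e\<in>P. v \<in> e)"

definition face_weight :: "nat \<Rightarrow> nat" where
  "face_weight j = (if even j then 1 else 2)"

text \<open>Edge weight of an edge of the row with m tiles (0 = no weight):
  top/bottom edges of a weight-1 tile have weight 2, of a weight-2 tile weight 1.\<close>
definition edge_weight :: "nat \<Rightarrow> vert set \<Rightarrow> nat" where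
  "edge_weight m e =
     (if \<exists>j<m. e = bot_edge j \<or> e = top_edge j
      then (if face_weight (THE j. j < m \<and> (e = bot_edge j \<or> e = top_edge j)) = 1 then 2 else 1)
      else 0)"

definition P_min :: "nat \<Rightarrow> vert set set" where
  "P_min m = bot_edge ` {j. j < m \<and> even j} \<union> top_edge ` {j. j < m \<and> even j}
             \<union> (if even m then {vert_edge m} else {})"

text \<open>Interior of (a disjoint union of) cycles C by the even-odd rule: tile j lies
  in the interior iff the upward vertical ray from its centre (j+1/2, 1/2) crosses
  an odd number of edges of C.  The only grid edges met by this ray are
  horizontal edges [j,j+1] x {y} with y \<ge> 1.\<close>
definition crosses_up_ray :: "nat \<Rightarrow> vert set \<Rightarrow> bool" where
  "crosses_up_ray j e \<longleftrightarrow> (\<exists>y\<ge>1. e = {(j, y), (Suc j, y)})"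

definition interior_tiles :: "nat \<Rightarrow> vert set set \<Rightarrow> nat set" where
  "interior_tiles m C = {j. j < m \<and> odd (card {e \<in> C. crosses_up_ray j e})}"

definition Twist :: "nat \<Rightarrow> vert set set \<Rightarrow> nat set" where
  "Twist m P = interior_tiles m (P - P_min m \<union> (P_min m - P))"

definition y_count :: "nat \<Rightarrow> nat \<Rightarrow> vert set set \<Rightarrow> int" where
  "y_count m i P = int (card {j \<in> Twist m P. face_weight j = i})"

definition a_count :: "nat \<Rightarrow> nat \<Rightarrow> vert set set \<Rightarrow> int" where
  "a_count m i P = int (card {e \<in> P. edge_weight m e = i})"

definition N_count :: "nat \<Rightarrow> nat \<Rightarrow> int" where
  "N_count m i = int (card {j. j < m \<and> face_weight j = i})"

definition nu :: "nat \<Rightarrow> vert set set \<Rightarrow> vec4" where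
  "nu m P = (a_count m 1 P - N_count m 1, a_count m 2 P - N_count m 2,
             y_count m 1 P, y_count m 2 P)"

text \<open>Twice the tile exponents (so that q^alpha = (q^(1/2))^(2 alpha)).
  In G_n tile j is G_i with i = j - n: alpha = i/2 (weight 1), -i/2 (weight 2).
  In H_n tile j is H_i with i = j - n: alpha = (i+1)/2 (weight 1), -i/2 (weight 2).\<close>
definition alpha2_G :: "nat \<Rightarrow> nat \<Rightarrow> int" where
  "alpha2_G n j = (let i = int j - int n in if face_weight j = 1 then i else - i)"

definition alpha2_H :: "nat \<Rightarrow> nat \<Rightarrow> int" where
  "alpha2_H n j = (let i = int j - int n in if face_weight j = 1 then i + 1 else - i)"

definition alpha2_P_G :: "nat \<Rightarrow> vert set set \<Rightarrow> int" where
  "alpha2_P_G n P = (\<Sum>j\<in>Twist (2 * n + 1) P. alpha2_G n j)"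

definition alpha2_P_H :: "nat \<Rightarrow> vert set set \<Rightarrow> int" where
  "alpha2_P_H n P = (\<Sum>j\<in>Twist (2 * n) P. alpha2_H n j)"

definition r_snake :: "nat \<Rightarrow> qmono multiset" where
  "r_snake n = image_mset (\<lambda>P. (alpha2_P_G n P, nu (2 * n + 1) P))
                 (mset_set {P. perfect_matching (2 * n + 1) P})"

definition s_snake :: "nat \<Rightarrow> qmono multiset" where
  "s_snake n = image_mset (\<lambda>P. (alpha2_P_H n P, nu (2 * n) P))
                 (mset_set {P. perfect_matching (2 * n) P})"

end

theory Submission
  imports Defs
begin

lemma edge_eqs[simp]:
  "bot_edge i = bot_edge j \<longleftrightarrow> i = j"
  "top_edge i = top_edge j \<longleftrightarrow> i = j"
  "vert_edge i = vert_edge j \<longleftrightarrow> i = j"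
  "bot_edge i \<noteq> top_edge j" "top_edge j \<noteq> bot_edge i"
  "bot_edge i \<noteq> vert_edge j" "vert_edge j \<noteq> bot_edge i"
  "top_edge i \<noteq> vert_edge j" "vert_edge j \<noteq> top_edge i"
  by (auto simp: bot_edge_def top_edge_def vert_edge_def doubleton_eq_iff)

lemma edge_mem[simp]:
  "v \<in> bot_edge j \<longleftrightarrow> snd v = 0 \<and> (fst v = j \<or> fst v = Suc j)"
  "v \<in> top_edge j \<longleftrightarrow> snd v = 1 \<and> (fst v = j \<or> fst v = Suc j)"
  "v \<in> vert_edge x \<longleftrightarrow> fst v = x \<and> (snd v = 0 \<or> snd v = 1)"
  by (cases v; auto simp: bot_edge_def top_edge_def vert_edge_def)+

lemma row_edges_mem:
  "e \<in> row_edges m \<longleftrightarrow> (\<exists>j<m. e = bot_edge j) \<or> (\<exists>j<m. e = top_edge j) \<or> (\<exists>x\<le>m. e = vert_edge x)"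
  by (auto simp: row_edges_def)

lemma row_edges_simps[simp]:
  "bot_edge j \<in> row_edges m \<longleftrightarrow> j < m"
  "top_edge j \<in> row_edges m \<longleftrightarrow> j < m"
  "vert_edge j \<in> row_edges m \<longleftrightarrow> j \<le> m"
  by (auto simp: row_edges_mem)

lemma row_verts_mem[simp]: "v \<in> row_verts m \<longleftrightarrow> fst v \<le> m \<and> snd v \<le> 1"
  by (cases v) (auto simp: row_verts_def)

lemma row_edge_verts: "e \<in> row_edges m \<Longrightarrow> v \<in> e \<Longrightarrow> fst v \<le> m \<and> snd v \<le> 1"
  by (auto simp: row_edges_mem)

lemma pm_alt: "perfect_matching m P \<longleftrightarrow> P \<subseteq> row_edges m \<and>
   (\<forall>v. fst v \<le> m \<longrightarrow> snd v \<le> 1 \<longrightarrow> (\<exists>e\<in>P. v \<in> e)) \<and>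
   (\<forall>v e e'. fst v \<le> m \<longrightarrow> snd v \<le> 1 \<longrightarrow> e \<in> P \<longrightarrow> e' \<in> P \<longrightarrow> v \<in> e \<longrightarrow> v \<in> e' \<longrightarrow> e = e')"
  unfolding perfect_matching_def Ball_def row_verts_mem by blast


lemma pm_A:
  assumes "perfect_matching m P"
  shows "perfect_matching (Suc m) (insert (vert_edge (Suc m)) P)"
proof -
  have sub: "P \<subseteq> row_edges m" and cov: "\<And>v. fst v \<le> m \<Longrightarrow> snd v \<le> 1 \<Longrightarrow> \<exists>e\<in>P. v \<in> e"
    and un: "\<And>v e e'. fst v \<le> m \<Longrightarrow> snd v \<le> 1 \<Longrightarrow> e \<in> P \<Longrightarrow> e' \<in> P \<Longrightarrow> v \<in> e \<Longrightarrow> v \<in> e' \<Longrightarrow> e = e'"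
    using assms unfolding pm_alt by blast+
  have sub2: "row_edges m \<subseteq> row_edges (Suc m)" by (auto simp: row_edges_mem)
  have nv: "e \<in> P \<Longrightarrow> v \<in> e \<Longrightarrow> fst v \<le> m" for e v using sub row_edge_verts by blast
  show ?thesis unfolding pm_alt
  proof (intro conjI allI impI)
    show "insert (vert_edge (Suc m)) P \<subseteq> row_edges (Suc m)" using sub sub2 by auto
  next
    fix v :: vert assume "fst v \<le> Suc m" "snd v \<le> 1"
    then show "\<exists>e\<in>insert (vert_edge (Suc m)) P. v \<in> e"
      using cov by (cases "fst v = Suc m") auto
  next
    fix v :: vert and e e' assume h: "fst v \<le> Suc m" "snd v \<le> 1" "e \<in> insert (vert_edge (Suc m)) P"
      "e' \<in> insert (vert_edge (Suc m)) P" "v \<in> e" "v \<in> e'"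
    show "e = e'"
    proof (cases "fst v = Suc m")
      case True
      then show ?thesis using h nv by fastforce
    next
      case False
      then show ?thesis using h un[of v e e'] by auto
    qed
  qed
qed

lemma pm_B:
  assumes "perfect_matching k P"
  shows "perfect_matching (Suc (Suc k)) (P \<union> {bot_edge (Suc k), top_edge (Suc k)})"
proof -
  have sub: "P \<subseteq> row_edges k" and cov: "\<And>v. fst v \<le> k \<Longrightarrow> snd v \<le> 1 \<Longrightarrow> \<exists>e\<in>P. v \<in> e"
    and un: "\<And>v e e'. fst v \<le> k \<Longrightarrow> snd v \<le> 1 \<Longrightarrow> e \<in> P \<Longrightarrow> e' \<in> P \<Longrightarrow> v \<in> e \<Longrightarrow> v \<in> e' \<Longrightarrow> e = e'"
    using assms unfolding pm_alt by blast+
  have sub2: "row_edges k \<subseteq> row_edges (Suc (Suc k))" by (auto simp: row_edges_mem)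
  have nv: "e \<in> P \<Longrightarrow> v \<in> e \<Longrightarrow> fst v \<le> k" for e v using sub row_edge_verts by blast
  show ?thesis unfolding pm_alt
  proof (intro conjI allI impI)
    show "P \<union> {bot_edge (Suc k), top_edge (Suc k)} \<subseteq> row_edges (Suc (Suc k))" using sub sub2 by auto
  next
    fix v :: vert assume h: "fst v \<le> Suc (Suc k)" "snd v \<le> 1"
    show "\<exists>e\<in>P \<union> {bot_edge (Suc k), top_edge (Suc k)}. v \<in> e"
    proof (cases "fst v \<le> k")
      case True then show ?thesis using cov h by blast
    next
      case False
      then have "fst v = Suc k \<or> fst v = Suc (Suc k)" using h by linarith
      moreover have "snd v = 0 \<or> snd v = 1" using h by linarith
      ultimately show ?thesis by auto
    qed
  next
    fix v :: vert and e e' assume h: "fst v \<le> Suc (Suc k)" "snd v \<le> 1" "e \<in> P \<union> {bot_edge (Suc k), top_edge (Suc k)}"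
      "e' \<in> P \<union> {bot_edge (Suc k), top_edge (Suc k)}" "v \<in> e" "v \<in> e'"
    show "e = e'"
    proof (cases "fst v \<le> k")
      case True
      then have "e \<in> P" "e' \<in> P" using h by auto
      then show ?thesis using h un[of v e e'] True by auto
    next
      case False
      then have "e \<notin> P" "e' \<notin> P" using h nv by fastforce+
      then show ?thesis using h by auto
    qed
  qed
qed


lemma pm_dec:
  assumes "perfect_matching (Suc m) P"
  shows "(vert_edge (Suc m) \<in> P \<and> bot_edge m \<notin> P \<and> top_edge m \<notin> P
            \<and> perfect_matching m (P - {vert_edge (Suc m)}))
       \<or> (bot_edge m \<in> P \<and> top_edge m \<in> P \<and> vert_edge (Suc m) \<notin> P \<and> vert_edge m \<notin> P
            \<and> (\<forall>j. Suc j = m \<longrightarrow> bot_edge j \<notin> P \<and> top_edge j \<notin> P)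
            \<and> (\<forall>k. m = Suc k \<longrightarrow> perfect_matching k (P - {bot_edge m, top_edge m})))"
proof -
  have sub: "P \<subseteq> row_edges (Suc m)" and cov: "\<And>v. fst v \<le> Suc m \<Longrightarrow> snd v \<le> 1 \<Longrightarrow> \<exists>e\<in>P. v \<in> e"
    and un: "\<And>v e e'. fst v \<le> Suc m \<Longrightarrow> snd v \<le> 1 \<Longrightarrow> e \<in> P \<Longrightarrow> e' \<in> P \<Longrightarrow> v \<in> e \<Longrightarrow> v \<in> e' \<Longrightarrow> e = e'"
    using assms unfolding pm_alt by blast+
  obtain e0 where e0: "e0 \<in> P" "(Suc m, 0) \<in> e0" using cov[of "(Suc m, 0)"] by auto
  have "e0 \<in> row_edges (Suc m)" using e0 sub by auto
  then have "e0 = bot_edge m \<or> e0 = vert_edge (Suc m)" using e0(2)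
    by (auto simp: row_edges_mem)
  then show ?thesis
  proof
    assume eb: "e0 = bot_edge m"
    obtain e1 where e1: "e1 \<in> P" "(Suc m, 1) \<in> e1" using cov[of "(Suc m, 1)"] by auto
    have "e1 \<in> row_edges (Suc m)" using e1 sub by auto
    then have "e1 = top_edge m \<or> e1 = vert_edge (Suc m)" using e1(2)
      by (auto simp: row_edges_mem)
    moreover have "vert_edge (Suc m) \<notin> P"
      using un[of "(Suc m, 0)" "vert_edge (Suc m)" "bot_edge m"] e0 eb by auto
    ultimately have tP: "top_edge m \<in> P" using e1 by auto
    have vm: "vert_edge m \<notin> P"
      using un[of "(m, 0)" "vert_edge m" "bot_edge m"] e0 eb by auto
    have jj: "\<forall>j. Suc j = m \<longrightarrow> bot_edge j \<notin> P \<and> top_edge j \<notin> P"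
    proof (intro allI impI)
      fix j assume "Suc j = m"
      then show "bot_edge j \<notin> P \<and> top_edge j \<notin> P"
        using un[of "(m, 0)" "bot_edge j" "bot_edge m"] un[of "(m, 1)" "top_edge j" "top_edge m"] e0 eb tP
        by auto
    qed
    have kk: "perfect_matching k (P - {bot_edge m, top_edge m})" if mk: "m = Suc k" for k
      unfolding pm_alt
    proof (intro conjI allI impI)
      show "P - {bot_edge m, top_edge m} \<subseteq> row_edges k"
      proof
        fix e assume he: "e \<in> P - {bot_edge m, top_edge m}"
        then have "e \<in> row_edges (Suc m)" using sub by auto
        then show "e \<in> row_edges k" using he jj vm \<open>vert_edge (Suc m) \<notin> P\<close> mk
          by (auto simp: row_edges_mem less_Suc_eq le_Suc_eq)
      qed
    next
      fix v :: vert assume "fst v \<le> k" "snd v \<le> 1"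
      then show "\<exists>e\<in>P - {bot_edge m, top_edge m}. v \<in> e"
        using cov[of v] mk by force
    next
      fix v :: vert and e e' assume "fst v \<le> k" "snd v \<le> 1" "e \<in> P - {bot_edge m, top_edge m}"
        "e' \<in> P - {bot_edge m, top_edge m}" "v \<in> e" "v \<in> e'"
      then show "e = e'" using un[of v e e'] mk by auto
    qed
    show ?thesis using e0 eb tP vm jj kk \<open>vert_edge (Suc m) \<notin> P\<close> by blast
  next
    assume ev: "e0 = vert_edge (Suc m)"
    have nb: "bot_edge m \<notin> P"
      using un[of "(Suc m, 0)" "vert_edge (Suc m)" "bot_edge m"] e0 ev by auto
    have nt: "top_edge m \<notin> P"
      using un[of "(Suc m, 1)" "vert_edge (Suc m)" "top_edge m"] e0 ev by auto
    have "perfect_matching m (P - {vert_edge (Suc m)})"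
      unfolding pm_alt
    proof (intro conjI allI impI)
      show "P - {vert_edge (Suc m)} \<subseteq> row_edges m"
      proof
        fix e assume he: "e \<in> P - {vert_edge (Suc m)}"
        then have "e \<in> row_edges (Suc m)" using sub by auto
        then show "e \<in> row_edges m" using he nb nt
          by (auto simp: row_edges_mem less_Suc_eq le_Suc_eq)
      qed
    next
      fix v :: vert assume "fst v \<le> m" "snd v \<le> 1"
      then show "\<exists>e\<in>P - {vert_edge (Suc m)}. v \<in> e"
        using cov[of v] by force
    next
      fix v :: vert and e e' assume "fst v \<le> m" "snd v \<le> 1" "e \<in> P - {vert_edge (Suc m)}"
        "e' \<in> P - {vert_edge (Suc m)}" "v \<in> e" "v \<in> e'"
      then show "e = e'" using un[of v e e'] by auto
    qed
    then show ?thesis using e0 ev nb nt by blast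
  qed
qed


lemma crosses_row: "e \<in> row_edges m \<Longrightarrow> crosses_up_ray j e \<longleftrightarrow> e = top_edge j"
proof
  assume e: "e \<in> row_edges m" and c: "crosses_up_ray j e"
  then obtain y where y: "y \<ge> 1" "e = {(j, y), (Suc j, y)}" unfolding crosses_up_ray_def by blast
  have m1: "(j, y) \<in> e" "(Suc j, y) \<in> e" using y by auto
  from e consider (b) k where "e = bot_edge k" | (t) k where "e = top_edge k" | (v) x where "e = vert_edge x"
    by (auto simp: row_edges_mem)
  then show "e = top_edge j"
  proof cases
    case b then show ?thesis using m1 y by simp
  next
    case t then have "k = j" "y = 1" using m1 by auto
    then show ?thesis using y by (simp add: top_edge_def)
  next
    case v then show ?thesis using m1 by simp
  qed
next
  assume "e = top_edge j"
  then show "crosses_up_ray j e" unfolding crosses_up_ray_def top_edge_def by auto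
qed

lemma Pmin_sub: "P_min m \<subseteq> row_edges m"
  by (auto simp: P_min_def)

lemma top_Pmin: "top_edge j \<in> P_min m \<longleftrightarrow> j < m \<and> even j"
  by (auto simp: P_min_def)

lemma twist_char:
  assumes "P \<subseteq> row_edges m"
  shows "Twist m P = {j. j < m \<and> (top_edge j \<in> P \<longleftrightarrow> odd j)}"
proof -
  let ?C = "P - P_min m \<union> (P_min m - P)"
  have C: "?C \<subseteq> row_edges m" using assms Pmin_sub by blast
  have "{e \<in> ?C. crosses_up_ray j e} = (if top_edge j \<in> ?C then {top_edge j} else {})" for j
    using C crosses_row[of _ m j] by auto
  then have "odd (card {e \<in> ?C. crosses_up_ray j e}) \<longleftrightarrow> top_edge j \<in> ?C" for j
    by simp
  then show ?thesis
    unfolding Twist_def interior_tiles_def using top_Pmin[of j m for j] by auto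
qed

lemma twist_sub: "Twist m P \<subseteq> {..<m}"
  by (auto simp: Twist_def interior_tiles_def)

lemma finite_twist[simp]: "finite (Twist m P)"
  using twist_sub finite_subset by blast


lemma pm_sub: "perfect_matching m P \<Longrightarrow> P \<subseteq> row_edges m"
  by (simp add: pm_alt)

lemma pm_Q: "perfect_matching m P \<Longrightarrow> j < m \<Longrightarrow> (bot_edge j \<in> P \<longleftrightarrow> top_edge j \<in> P)"
proof (induction m arbitrary: P j rule: less_induct)
  case (less m)
  show ?case
  proof (cases m)
    case 0 then show ?thesis using less by simp
  next
    case (Suc m')
    note d = pm_dec[of m' P]
    have pm: "perfect_matching (Suc m') P" using less Suc by simp
    from d[OF pm] show ?thesis
    proof
      assume A: "vert_edge (Suc m') \<in> P \<and> bot_edge m' \<notin> P \<and> top_edge m' \<notin> P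
            \<and> perfect_matching m' (P - {vert_edge (Suc m')})"
      show ?thesis
      proof (cases "j = m'")
        case True then show ?thesis using A by simp
      next
        case False
        then have "j < m'" using less Suc by simp
        then have "bot_edge j \<in> P - {vert_edge (Suc m')} \<longleftrightarrow> top_edge j \<in> P - {vert_edge (Suc m')}"
          using less.IH[of m' "P - {vert_edge (Suc m')}" j] A Suc by simp
        then show ?thesis by simp
      qed
    next
      assume B: "bot_edge m' \<in> P \<and> top_edge m' \<in> P \<and> vert_edge (Suc m') \<notin> P \<and> vert_edge m' \<notin> P
            \<and> (\<forall>j. Suc j = m' \<longrightarrow> bot_edge j \<notin> P \<and> top_edge j \<notin> P)
            \<and> (\<forall>k. m' = Suc k \<longrightarrow> perfect_matching k (P - {bot_edge m', top_edge m'}))"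
      show ?thesis
      proof (cases "j = m' \<or> Suc j = m'")
        case True then show ?thesis using B by auto
      next
        case False
        then obtain k where k: "m' = Suc k" "j < k" using less Suc
          by (metis less_SucE not0_implies_Suc not_less_zero)
        then have "bot_edge j \<in> P - {bot_edge m', top_edge m'} \<longleftrightarrow> top_edge j \<in> P - {bot_edge m', top_edge m'}"
          using less.IH[of k "P - {bot_edge m', top_edge m'}" j] B Suc by simp
        then show ?thesis using k by simp
      qed
    qed
  qed
qed

definition ewf :: "nat \<Rightarrow> nat" where "ewf j = (if even j then 2 else 1)"

lemma ew_simps[simp]:
  "edge_weight m (bot_edge j) = (if j < m then ewf j else 0)"
  "edge_weight m (top_edge j) = (if j < m then ewf j else 0)"
  "edge_weight m (vert_edge x) = 0"
proof -
  have th: "j < m \<Longrightarrow> (THE ja. ja < m \<and> j = ja) = j" for j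
    by (rule the_equality) auto
  show "edge_weight m (bot_edge j) = (if j < m then ewf j else 0)"
    by (auto simp: edge_weight_def ewf_def face_weight_def th)
  show "edge_weight m (top_edge j) = (if j < m then ewf j else 0)"
    by (auto simp: edge_weight_def ewf_def face_weight_def th)
  show "edge_weight m (vert_edge x) = 0"
    by (auto simp: edge_weight_def)
qed

lemma weight_set:
  assumes "perfect_matching m P" "i > 0"
  shows "{e\<in>P. edge_weight m e = i} = bot_edge ` {j. j<m \<and> ewf j = i \<and> top_edge j \<in> P}
            \<union> top_edge ` {j. j<m \<and> ewf j = i \<and> top_edge j \<in> P}"
proof -
  have sub: "P \<subseteq> row_edges m" using assms pm_sub by blast
  have Q: "j < m \<Longrightarrow> (bot_edge j \<in> P \<longleftrightarrow> top_edge j \<in> P)" for j using pm_Q assms by blast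
  show ?thesis
  proof (intro set_eqI iffI)
    fix e assume "e \<in> {e\<in>P. edge_weight m e = i}"
    then have e: "e \<in> P" "edge_weight m e = i" by auto
    then have "e \<in> row_edges m" using sub by auto
    then consider (b) k where "k < m" "e = bot_edge k" | (t) k where "k<m" "e = top_edge k" | (v) x where "e = vert_edge x"
      by (auto simp: row_edges_mem)
    then show "e \<in> bot_edge ` {j. j<m \<and> ewf j = i \<and> top_edge j \<in> P} \<union> top_edge ` {j. j<m \<and> ewf j = i \<and> top_edge j \<in> P}"
    proof cases
      case b then show ?thesis using e Q by auto
    next
      case t then show ?thesis using e by auto
    next
      case v then show ?thesis using e assms by simp
    qed
  next
    fix e assume "e \<in> bot_edge ` {j. j<m \<and> ewf j = i \<and> top_edge j \<in> P} \<union> top_edge ` {j. j<m \<and> ewf j = i \<and> top_edge j \<in> P}"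
    then show "e \<in> {e\<in>P. edge_weight m e = i}" using Q by auto
  qed
qed

lemma card_weight:
  assumes "perfect_matching m P" "i > 0"
  shows "card {e\<in>P. edge_weight m e = i} = 2 * card {j. j<m \<and> ewf j = i \<and> top_edge j \<in> P}"
proof -
  let ?A = "{j. j<m \<and> ewf j = i \<and> top_edge j \<in> P}"
  have f: "finite ?A" by simp
  have "card (bot_edge ` ?A \<union> top_edge ` ?A) = card (bot_edge ` ?A) + card (top_edge ` ?A)"
    by (rule card_Un_disjoint) auto
  also have "\<dots> = card ?A + card ?A"
    by (simp add: card_image inj_on_def)
  finally show ?thesis using weight_set[OF assms] by simp
qed


definition cnt :: "nat \<Rightarrow> nat set \<Rightarrow> int" where
  "cnt i T = int (card {j\<in>T. face_weight j = i})"

lemma fw_simps: "face_weight j = 1 \<longleftrightarrow> even j" "face_weight j = 2 \<longleftrightarrow> odd j"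
  by (auto simp: face_weight_def)

lemma cnt_insert: "finite T \<Longrightarrow> j \<notin> T \<Longrightarrow> cnt i (insert j T) = cnt i T + (if face_weight j = i then 1 else 0)"
proof -
  assume f: "finite T" and j: "j \<notin> T"
  have "{x \<in> insert j T. face_weight x = i} = (if face_weight j = i then insert j {x\<in>T. face_weight x = i} else {x\<in>T. face_weight x = i})"
    by auto
  then show ?thesis unfolding cnt_def using f j by simp
qed

lemma card_split: "card {j. j < (m::nat) \<and> P j} = card {j. j < m \<and> P j \<and> Q j} + card {j. j < m \<and> P j \<and> \<not> Q j}"
proof -
  have "{j. j < m \<and> P j} = {j. j < m \<and> P j \<and> Q j} \<union> {j. j < m \<and> P j \<and> \<not> Q j}" by auto
  moreover have "card ({j. j < m \<and> P j \<and> Q j} \<union> {j. j < m \<and> P j \<and> \<not> Q j}) =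
     card {j. j < m \<and> P j \<and> Q j} + card {j. j < m \<and> P j \<and> \<not> Q j}"
    by (rule card_Un_disjoint) (auto intro: finite_subset[where B="{..<m}"])
  ultimately show ?thesis by simp
qed

lemma nu_formula:
  assumes "perfect_matching m P"
  shows "nu m P = (2 * y_count m 2 P - N_count m 1, 2 * (N_count m 1 - y_count m 1 P) - N_count m 2,
                   y_count m 1 P, y_count m 2 P)"
proof -
  have tw: "Twist m P = {j. j < m \<and> (top_edge j \<in> P \<longleftrightarrow> odd j)}"
    using twist_char pm_sub assms by blast
  have y1: "y_count m 1 P = int (card {j. j < m \<and> even j \<and> top_edge j \<notin> P})"
    unfolding y_count_def tw fw_simps by (rule arg_cong[where f="\<lambda>A. int (card A)"]) auto
  have y2: "y_count m 2 P = int (card {j. j < m \<and> odd j \<and> top_edge j \<in> P})"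
    unfolding y_count_def tw fw_simps by (rule arg_cong[where f="\<lambda>A. int (card A)"]) auto
  have e1: "{j. j<m \<and> ewf j = 1 \<and> top_edge j \<in> P} = {j. j < m \<and> odd j \<and> top_edge j \<in> P}"
    by (auto simp: ewf_def)
  have e2: "{j. j<m \<and> ewf j = 2 \<and> top_edge j \<in> P} = {j. j < m \<and> even j \<and> top_edge j \<in> P}"
    by (auto simp: ewf_def)
  have a1: "a_count m 1 P = 2 * int (card {j. j < m \<and> odd j \<and> top_edge j \<in> P})"
    unfolding a_count_def using card_weight[OF assms, of 1] e1 by simp
  have a2: "a_count m 2 P = 2 * int (card {j. j < m \<and> even j \<and> top_edge j \<in> P})"
    unfolding a_count_def using card_weight[OF assms, of 2] e2 by simp
  have n1: "N_count m 1 = int (card {j. j < m \<and> even j \<and> top_edge j \<in> P}) + int (card {j. j < m \<and> even j \<and> top_edge j \<notin> P})"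
    unfolding N_count_def fw_simps using card_split[of m even "\<lambda>j. top_edge j \<in> P"] by simp
  show ?thesis unfolding nu_def a1 a2 y1 y2 n1 by simp
qed

lemma N_count_Suc: "N_count (Suc m) i = N_count m i + (if face_weight m = i then 1 else 0)"
proof -
  have "{j. j < Suc m \<and> face_weight j = i} = {j. j < m \<and> face_weight j = i} \<union> (if face_weight m = i then {m} else {})"
    by (auto simp: less_Suc_eq)
  then show ?thesis unfolding N_count_def by (simp add: card_Un_disjoint)
qed

lemma N_count_closed: "N_count m 1 = int ((m + 1) div 2) \<and> N_count m 2 = int (m div 2)"
proof (induction m)
  case 0 then show ?case by (simp add: N_count_def)
next
  case (Suc m) then show ?case by (auto simp: N_count_Suc face_weight_def elim: oddE)
qed


lemma TA:
  assumes "perfect_matching m P"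
  shows "Twist (Suc m) (insert (vert_edge (Suc m)) P) = (if even m then insert m (Twist m P) else Twist m P)"
proof -
  have s1: "P \<subseteq> row_edges m" using assms pm_sub by blast
  have s2: "insert (vert_edge (Suc m)) P \<subseteq> row_edges (Suc m)" using pm_A[OF assms] pm_sub by blast
  have tm: "top_edge m \<notin> P" using s1 by auto
  show ?thesis unfolding twist_char[OF s1] twist_char[OF s2]
    using tm by (auto simp: less_Suc_eq)
qed

lemma TB:
  assumes "perfect_matching k P"
  shows "Twist (Suc (Suc k)) (P \<union> {bot_edge (Suc k), top_edge (Suc k)}) =
     (if even k then insert k (insert (Suc k) (Twist k P)) else Twist k P)"
proof -
  have s1: "P \<subseteq> row_edges k" using assms pm_sub by blast
  have s2: "P \<union> {bot_edge (Suc k), top_edge (Suc k)} \<subseteq> row_edges (Suc (Suc k))" using pm_B[OF assms] pm_sub by blast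
  have tm: "top_edge k \<notin> P" "top_edge (Suc k) \<notin> P" using s1 by auto
  show ?thesis unfolding twist_char[OF s1] twist_char[OF s2]
    using tm by (auto simp: less_Suc_eq)
qed

lemma sum_fw:
  assumes "finite T"
  shows "(\<Sum>j\<in>T. (if face_weight j = 1 then (a::int) else b)) = a * cnt 1 T + b * cnt 2 T"
proof -
  have e: "T \<inter> - {j. face_weight j = 1} = {j\<in>T. face_weight j = 2}"
    by (auto simp: face_weight_def)
  have e2: "T \<inter> {j. face_weight j = 1} = {j\<in>T. face_weight j = 1}" by auto
  show ?thesis unfolding sum.If_cases[OF assms] e e2 cnt_def by simp
qed

lemma sH: "finite T \<Longrightarrow> (\<Sum>j\<in>T. alpha2_H n j) = (\<Sum>j\<in>T. alpha2_G n j) + cnt 1 T"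
proof -
  assume f: "finite T"
  have "(\<Sum>j\<in>T. alpha2_H n j) = (\<Sum>j\<in>T. alpha2_G n j + (if face_weight j = 1 then 1 else 0))"
    by (rule sum.cong) (auto simp: alpha2_H_def alpha2_G_def Let_def)
  then show ?thesis using sum_fw[OF f, of 1 0] by (simp add: sum.distrib)
qed

lemma sG: "finite T \<Longrightarrow> (\<Sum>j\<in>T. alpha2_G k j) = (\<Sum>j\<in>T. alpha2_G (Suc k) j) + cnt 1 T - cnt 2 T"
proof -
  assume f: "finite T"
  have "(\<Sum>j\<in>T. alpha2_G k j) = (\<Sum>j\<in>T. alpha2_G (Suc k) j + (if face_weight j = 1 then 1 else -1))"
    by (rule sum.cong) (auto simp: alpha2_G_def Let_def)
  then show ?thesis using sum_fw[OF f, of 1 "-1"] by (simp add: sum.distrib)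
qed

lemma sHs: "finite T \<Longrightarrow> (\<Sum>j\<in>T. alpha2_H k j) = (\<Sum>j\<in>T. alpha2_H (Suc k) j) + cnt 1 T - cnt 2 T"
proof -
  assume f: "finite T"
  have "(\<Sum>j\<in>T. alpha2_H k j) = (\<Sum>j\<in>T. alpha2_H (Suc k) j + (if face_weight j = 1 then 1 else -1))"
    by (rule sum.cong) (auto simp: alpha2_H_def Let_def)
  then show ?thesis using sum_fw[OF f, of 1 "-1"] by (simp add: sum.distrib)
qed

lemma finite_pm: "finite {P. perfect_matching m P}"
proof -
  have "finite (row_edges m)" by (simp add: row_edges_def)
  then have "finite (Pow (row_edges m))" by simp
  moreover have "{P. perfect_matching m P} \<subseteq> Pow (row_edges m)" using pm_sub by blast
  ultimately show ?thesis using finite_subset by blast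
qed

lemma pm_set_split:
  "{P. perfect_matching (Suc (Suc k)) P} =
     insert (vert_edge (Suc (Suc k))) ` {P. perfect_matching (Suc k) P}
   \<union> (\<lambda>P. P \<union> {bot_edge (Suc k), top_edge (Suc k)}) ` {P. perfect_matching k P}"
proof (intro set_eqI iffI)
  fix P assume "P \<in> {P. perfect_matching (Suc (Suc k)) P}"
  then have pm: "perfect_matching (Suc (Suc k)) P" by simp
  from pm_dec[OF pm] show "P \<in> insert (vert_edge (Suc (Suc k))) ` {P. perfect_matching (Suc k) P}
   \<union> (\<lambda>P. P \<union> {bot_edge (Suc k), top_edge (Suc k)}) ` {P. perfect_matching k P}"
  proof
    assume A: "vert_edge (Suc (Suc k)) \<in> P \<and> bot_edge (Suc k) \<notin> P \<and> top_edge (Suc k) \<notin> P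
            \<and> perfect_matching (Suc k) (P - {vert_edge (Suc (Suc k))})"
    then have "P = insert (vert_edge (Suc (Suc k))) (P - {vert_edge (Suc (Suc k))})" by auto
    then show ?thesis using A by blast
  next
    assume B: "bot_edge (Suc k) \<in> P \<and> top_edge (Suc k) \<in> P \<and> vert_edge (Suc (Suc k)) \<notin> P \<and> vert_edge (Suc k) \<notin> P
            \<and> (\<forall>j. Suc j = Suc k \<longrightarrow> bot_edge j \<notin> P \<and> top_edge j \<notin> P)
            \<and> (\<forall>k'. Suc k = Suc k' \<longrightarrow> perfect_matching k' (P - {bot_edge (Suc k), top_edge (Suc k)}))"
    then have "P = (P - {bot_edge (Suc k), top_edge (Suc k)}) \<union> {bot_edge (Suc k), top_edge (Suc k)}" by auto
    moreover have "perfect_matching k (P - {bot_edge (Suc k), top_edge (Suc k)})" using B by blast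
    ultimately show ?thesis by blast
  qed
next
  fix P assume "P \<in> insert (vert_edge (Suc (Suc k))) ` {P. perfect_matching (Suc k) P}
   \<union> (\<lambda>P. P \<union> {bot_edge (Suc k), top_edge (Suc k)}) ` {P. perfect_matching k P}"
  then show "P \<in> {P. perfect_matching (Suc (Suc k)) P}" using pm_A pm_B by auto
qed


lemma mset_split:
  "image_mset f (mset_set {P. perfect_matching (Suc (Suc k)) P}) =
     image_mset (\<lambda>P. f (insert (vert_edge (Suc (Suc k))) P)) (mset_set {P. perfect_matching (Suc k) P})
   + image_mset (\<lambda>P. f (P \<union> {bot_edge (Suc k), top_edge (Suc k)})) (mset_set {P. perfect_matching k P})"
proof -
  let ?gA = "insert (vert_edge (Suc (Suc k)))"
  let ?gB = "\<lambda>P. P \<union> {bot_edge (Suc k), top_edge (Suc k)}"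
  have nA: "vert_edge (Suc (Suc k)) \<notin> P" if "perfect_matching (Suc k) P" for P
  proof -
    have "vert_edge (Suc (Suc k)) \<notin> row_edges (Suc k)" by simp
    then show ?thesis using pm_sub[OF that] by blast
  qed
  have nB: "bot_edge (Suc k) \<notin> P \<and> top_edge (Suc k) \<notin> P" if "perfect_matching k P" for P
  proof -
    have "bot_edge (Suc k) \<notin> row_edges k" "top_edge (Suc k) \<notin> row_edges k" by simp_all
    then show ?thesis using pm_sub[OF that] by blast
  qed
  have injA: "inj_on ?gA {P. perfect_matching (Suc k) P}"
  proof (rule inj_onI)
    fix P P' assume h: "P \<in> {P. perfect_matching (Suc k) P}" "P' \<in> {P. perfect_matching (Suc k) P}" "?gA P = ?gA P'"
    have "vert_edge (Suc (Suc k)) \<notin> P" "vert_edge (Suc (Suc k)) \<notin> P'"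
      using h(1,2) nA by simp_all
    then show "P = P'" using h(3) insert_ident by metis
  qed
  have injB: "inj_on ?gB {P. perfect_matching k P}"
  proof (rule inj_onI)
    fix P P' assume h: "P \<in> {P. perfect_matching k P}" "P' \<in> {P. perfect_matching k P}" "?gB P = ?gB P'"
    have n: "bot_edge (Suc k) \<notin> P" "top_edge (Suc k) \<notin> P" "bot_edge (Suc k) \<notin> P'" "top_edge (Suc k) \<notin> P'"
      using h(1,2) nB by simp_all
    have e1: "P = ?gB P - {bot_edge (Suc k), top_edge (Suc k)}" using n(1,2) by blast
    have e2: "P' = ?gB P' - {bot_edge (Suc k), top_edge (Suc k)}" using n(3,4) by blast
    show "P = P'" using e1 e2 h(3) by metis
  qed
  have d1: "vert_edge (Suc (Suc k)) \<in> X" if hX: "X \<in> ?gA ` {P. perfect_matching (Suc k) P}" for X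
  proof -
    obtain P where "X = ?gA P" using hX by blast
    then show ?thesis by simp
  qed
  have d2: "vert_edge (Suc (Suc k)) \<notin> X" if hX: "X \<in> ?gB ` {P. perfect_matching k P}" for X
  proof -
    obtain P where P: "perfect_matching k P" "X = ?gB P" using hX by blast
    have "vert_edge (Suc (Suc k)) \<notin> row_edges k" by simp
    then have "vert_edge (Suc (Suc k)) \<notin> P" using pm_sub[OF P(1)] by blast
    then show ?thesis using P(2) by simp
  qed
  have disj: "?gA ` {P. perfect_matching (Suc k) P} \<inter> ?gB ` {P. perfect_matching k P} = {}"
    unfolding disjoint_iff using d1 d2 by metis
  have "mset_set {P. perfect_matching (Suc (Suc k)) P} =
        mset_set (?gA ` {P. perfect_matching (Suc k) P}) + mset_set (?gB ` {P. perfect_matching k P})"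
    unfolding pm_set_split
    by (rule mset_set_Union) (simp_all only: disj finite_pm finite_imageI)
  also have "\<dots> = image_mset ?gA (mset_set {P. perfect_matching (Suc k) P}) + image_mset ?gB (mset_set {P. perfect_matching k P})"
    by (simp only: image_mset_mset_set[OF injA] image_mset_mset_set[OF injB])
  finally have "mset_set {P. perfect_matching (Suc (Suc k)) P} = image_mset ?gA (mset_set {P. perfect_matching (Suc k) P}) + image_mset ?gB (mset_set {P. perfect_matching k P})" .
  then show ?thesis by (simp add: multiset.map_comp comp_def)
qed



lemma qmult_single_r: "qmult A {#y#} = image_mset (\<lambda>x. mono_mult x y) A"
  unfolding qmult_def by (induction A) auto

lemma qmult_single_l: "qmult {#x#} B = image_mset (mono_mult x) B"
  unfolding qmult_def by simp

lemma nu_cnt: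
  assumes "perfect_matching m P"
  shows "nu m P = (2 * cnt 2 (Twist m P) - int ((m + 1) div 2),
                   2 * (int ((m + 1) div 2) - cnt 1 (Twist m P)) - int (m div 2),
                   cnt 1 (Twist m P), cnt 2 (Twist m P))"
  using nu_formula[OF assms] N_count_closed[of m] unfolding y_count_def cnt_def by simp

lemma notin_twist: "j \<ge> m \<Longrightarrow> j \<notin> Twist m P"
  using twist_sub[of m P] by auto

lemma pa_A:
  assumes pm: "perfect_matching (Suc (Suc (2*k))) P"
  shows "mono_mult (alpha2_P_G (Suc k) (insert (vert_edge (Suc (Suc (Suc (2*k))))) P),
                    nu (2 * Suc k + 1) (insert (vert_edge (Suc (Suc (Suc (2*k))))) P)) (0, (1,0,0,0))
       = mono_mult (mono_mult (1, (0,0,0,0)) (alpha2_P_H (Suc k) P, nu (2 * Suc k) P)) (0, (0,0,1,0))"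
proof -
  let ?P' = "insert (vert_edge (Suc (Suc (Suc (2*k))))) P"
  let ?T = "Twist (Suc (Suc (2*k))) P"
  have m1: "2 * Suc k + 1 = Suc (Suc (Suc (2*k)))" and m2: "2 * Suc k = Suc (Suc (2*k))" by simp_all
  have pm': "perfect_matching (Suc (Suc (Suc (2*k)))) ?P'" using pm_A[OF pm] .
  have tw: "Twist (Suc (Suc (Suc (2*k)))) ?P' = insert (Suc (Suc (2*k))) ?T" using TA[OF pm] by simp
  have nT: "Suc (Suc (2*k)) \<notin> ?T" by (rule notin_twist) simp
  have fw: "face_weight (Suc (Suc (2*k))) = 1" by (simp add: face_weight_def)
  have c1: "cnt 1 (insert (Suc (Suc (2*k))) ?T) = cnt 1 ?T + 1"
    using cnt_insert[OF finite_twist nT] fw by simp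
  have c2: "cnt 2 (insert (Suc (Suc (2*k))) ?T) = cnt 2 ?T"
    using cnt_insert[OF finite_twist nT] fw by simp
  have ag: "alpha2_G (Suc k) (Suc (Suc (2*k))) = int (Suc k)"
    by (simp add: alpha2_G_def face_weight_def Let_def)
  have aG: "alpha2_P_G (Suc k) ?P' = int (Suc k) + (\<Sum>j\<in>?T. alpha2_G (Suc k) j)"
    unfolding alpha2_P_G_def m1 tw using nT ag by simp
  have aH: "alpha2_P_H (Suc k) P = (\<Sum>j\<in>?T. alpha2_G (Suc k) j) + cnt 1 ?T"
    unfolding alpha2_P_H_def m2 by (rule sH) simp
  have d1: "(Suc (Suc (Suc (2*k))) + 1) div 2 = k + 2" "Suc (Suc (Suc (2*k))) div 2 = k + 1"
    "(Suc (Suc (2*k)) + 1) div 2 = k + 1" "Suc (Suc (2*k)) div 2 = k + 1" by presburger+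
  have nu1: "nu (2 * Suc k + 1) ?P' = (2 * cnt 2 ?T - int (k+2), 2 * (int (k+2) - (cnt 1 ?T + 1)) - int (k+1), cnt 1 ?T + 1, cnt 2 ?T)"
    unfolding m1 nu_cnt[OF pm'] tw c1 c2 d1 ..
  have nu2: "nu (2 * Suc k) P = (2 * cnt 2 ?T - int (k+1), 2 * (int (k+1) - cnt 1 ?T) - int (k+1), cnt 1 ?T, cnt 2 ?T)"
    unfolding m2 nu_cnt[OF pm] d1 ..
  show ?thesis unfolding aG aH nu1 nu2 mono_mult_def by simp
qed


lemma pa_B:
  assumes pm: "perfect_matching (Suc (2*k)) P"
  shows "mono_mult (alpha2_P_G (Suc k) (P \<union> {bot_edge (Suc (Suc (2*k))), top_edge (Suc (Suc (2*k)))}),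
                    nu (2 * Suc k + 1) (P \<union> {bot_edge (Suc (Suc (2*k))), top_edge (Suc (Suc (2*k)))})) (0, (1,0,0,0))
       = mono_mult (alpha2_P_G k P, nu (2 * k + 1) P) (0, (0,1,0,0))"
proof -
  let ?P' = "P \<union> {bot_edge (Suc (Suc (2*k))), top_edge (Suc (Suc (2*k)))}"
  let ?T = "Twist (Suc (2*k)) P"
  have m1: "2 * Suc k + 1 = Suc (Suc (Suc (2*k)))" and m2: "2 * k + 1 = Suc (2*k)" by simp_all
  have pm': "perfect_matching (Suc (Suc (Suc (2*k)))) ?P'" using pm_B[OF pm] .
  have tw: "Twist (Suc (Suc (Suc (2*k)))) ?P' = ?T" using TB[OF pm] by simp
  have aG: "alpha2_P_G (Suc k) ?P' = (\<Sum>j\<in>?T. alpha2_G (Suc k) j)"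
    unfolding alpha2_P_G_def m1 tw ..
  have aG2: "alpha2_P_G k P = (\<Sum>j\<in>?T. alpha2_G (Suc k) j) + cnt 1 ?T - cnt 2 ?T"
    unfolding alpha2_P_G_def m2 by (rule sG) simp
  have d1: "(Suc (Suc (Suc (2*k))) + 1) div 2 = k + 2" "Suc (Suc (Suc (2*k))) div 2 = k + 1"
    "(Suc (2*k) + 1) div 2 = k + 1" "Suc (2*k) div 2 = k" by presburger+
  have nu1: "nu (2 * Suc k + 1) ?P' = (2 * cnt 2 ?T - int (k+2), 2 * (int (k+2) - cnt 1 ?T) - int (k+1), cnt 1 ?T, cnt 2 ?T)"
    unfolding m1 nu_cnt[OF pm'] tw d1 ..
  have nu2: "nu (2 * k + 1) P = (2 * cnt 2 ?T - int (k+1), 2 * (int (k+1) - cnt 1 ?T) - int k, cnt 1 ?T, cnt 2 ?T)"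
    unfolding m2 nu_cnt[OF pm] d1 ..
  show ?thesis unfolding aG aG2 nu1 nu2 mono_mult_def by simp
qed

lemma pb_A:
  assumes pm: "perfect_matching (Suc (2*k)) P"
  shows "mono_mult (0, (0,1,0,0)) (alpha2_P_H (Suc k) (insert (vert_edge (Suc (Suc (2*k)))) P),
                    nu (2 * Suc k) (insert (vert_edge (Suc (Suc (2*k)))) P))
       = (alpha2_P_G k P, nu (2 * k + 1) P)"
proof -
  let ?P' = "insert (vert_edge (Suc (Suc (2*k)))) P"
  let ?T = "Twist (Suc (2*k)) P"
  have m1: "2 * Suc k = Suc (Suc (2*k))" and m2: "2 * k + 1 = Suc (2*k)" by simp_all
  have pm': "perfect_matching (Suc (Suc (2*k))) ?P'" using pm_A[OF pm] .
  have tw: "Twist (Suc (Suc (2*k))) ?P' = ?T" using TA[OF pm] by simp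
  have aH: "alpha2_P_H (Suc k) ?P' = (\<Sum>j\<in>?T. alpha2_G (Suc k) j) + cnt 1 ?T"
    unfolding alpha2_P_H_def m1 tw by (rule sH) simp
  have aG2: "alpha2_P_G k P = (\<Sum>j\<in>?T. alpha2_G (Suc k) j) + cnt 1 ?T - cnt 2 ?T"
    unfolding alpha2_P_G_def m2 by (rule sG) simp
  have d1: "(Suc (Suc (2*k)) + 1) div 2 = k + 1" "Suc (Suc (2*k)) div 2 = k + 1"
    "(Suc (2*k) + 1) div 2 = k + 1" "Suc (2*k) div 2 = k" by presburger+
  have nu1: "nu (2 * Suc k) ?P' = (2 * cnt 2 ?T - int (k+1), 2 * (int (k+1) - cnt 1 ?T) - int (k+1), cnt 1 ?T, cnt 2 ?T)"
    unfolding m1 nu_cnt[OF pm'] tw d1 ..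
  have nu2: "nu (2 * k + 1) P = (2 * cnt 2 ?T - int (k+1), 2 * (int (k+1) - cnt 1 ?T) - int k, cnt 1 ?T, cnt 2 ?T)"
    unfolding m2 nu_cnt[OF pm] d1 ..
  show ?thesis unfolding aH aG2 nu1 nu2 mono_mult_def by simp
qed

lemma pb_B:
  assumes pm: "perfect_matching (2*k) P"
  shows "mono_mult (0, (0,1,0,0)) (alpha2_P_H (Suc k) (P \<union> {bot_edge (Suc (2*k)), top_edge (Suc (2*k))}),
                    nu (2 * Suc k) (P \<union> {bot_edge (Suc (2*k)), top_edge (Suc (2*k))}))
       = mono_mult (mono_mult (-1, (0,0,0,0)) (0, (1,0,1,1))) (alpha2_P_H k P, nu (2 * k) P)"
proof -
  let ?P' = "P \<union> {bot_edge (Suc (2*k)), top_edge (Suc (2*k))}"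
  let ?T = "Twist (2*k) P"
  have m1: "2 * Suc k = Suc (Suc (2*k))" by simp
  have pm': "perfect_matching (Suc (Suc (2*k))) ?P'" using pm_B[OF pm] .
  have tw: "Twist (Suc (Suc (2*k))) ?P' = insert (2*k) (insert (Suc (2*k)) ?T)" using TB[OF pm] by simp
  have nT: "2*k \<notin> ?T" "Suc (2*k) \<notin> ?T" by (rule notin_twist, simp)+
  have fw: "face_weight (2*k) = 1" "face_weight (Suc (2*k)) = 2" by (simp_all add: face_weight_def)
  have nT2: "2*k \<notin> insert (Suc (2*k)) ?T" using nT by simp
  have c1: "cnt 1 (insert (2*k) (insert (Suc (2*k)) ?T)) = cnt 1 ?T + 1"
    using cnt_insert[OF _ nT2] cnt_insert[OF finite_twist nT(2)] fw by simp
  have c2: "cnt 2 (insert (2*k) (insert (Suc (2*k)) ?T)) = cnt 2 ?T + 1"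
    using cnt_insert[OF _ nT2] cnt_insert[OF finite_twist nT(2)] fw by simp
  have ah: "alpha2_H (Suc k) (2*k) = int k" "alpha2_H (Suc k) (Suc (2*k)) = - int k"
    by (simp_all add: alpha2_H_def face_weight_def Let_def)
  have aH: "alpha2_P_H (Suc k) ?P' = (\<Sum>j\<in>?T. alpha2_H (Suc k) j)"
    unfolding alpha2_P_H_def m1 tw using nT nT2 ah by simp
  have aH2: "alpha2_P_H k P = (\<Sum>j\<in>?T. alpha2_H (Suc k) j) + cnt 1 ?T - cnt 2 ?T"
    unfolding alpha2_P_H_def by (rule sHs) simp
  have aH3: "(\<Sum>j\<in>?T. alpha2_H (Suc k) j) = (\<Sum>j\<in>?T. alpha2_G (Suc k) j) + cnt 1 ?T"
    by (rule sH) simp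
  have d1: "(Suc (Suc (2*k)) + 1) div 2 = k + 1" "Suc (Suc (2*k)) div 2 = k + 1"
    "(2*k + 1) div 2 = k" "(2*k) div 2 = k" by presburger+
  have nu1: "nu (2 * Suc k) ?P' = (2 * (cnt 2 ?T + 1) - int (k+1), 2 * (int (k+1) - (cnt 1 ?T + 1)) - int (k+1), cnt 1 ?T + 1, cnt 2 ?T + 1)"
    unfolding m1 nu_cnt[OF pm'] tw c1 c2 d1 ..
  have nu2: "nu (2 * k) P = (2 * cnt 2 ?T - int k, 2 * (int k - cnt 1 ?T) - int k, cnt 1 ?T, cnt 2 ?T)"
    unfolding nu_cnt[OF pm] d1 ..
  show ?thesis unfolding aH aH2 aH3 nu1 nu2 mono_mult_def by simp
qed


theorem mainTheorem7:
  fixes n :: nat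
  assumes "n \<ge> 1"
  shows "qmult (r_snake n) X1 = qmult (qmult (qM 1 (0, 0, 0, 0)) (s_snake n)) Y1
                                 + qmult (r_snake (n - 1)) X2
         \<and> qmult X2 (s_snake n) = r_snake (n - 1)
                                 + qmult (qmult (qM (-1) (0, 0, 0, 0)) (qM 0 (1, 0, 1, 1))) (s_snake (n - 1))"
proof -
  obtain k where n: "n = Suc k" using assms by (cases n) auto
  have nm: "n - 1 = k" using n by simp
  have e1: "{P. perfect_matching (2 * Suc k + 1) P} = {P. perfect_matching (Suc (Suc (Suc (2*k)))) P}" by simp
  have e2: "{P. perfect_matching (2 * Suc k) P} = {P. perfect_matching (Suc (Suc (2*k))) P}" by simp
  have e3: "{P. perfect_matching (2 * k + 1) P} = {P. perfect_matching (Suc (2*k)) P}" by simp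
  let ?fG = "\<lambda>P. (alpha2_P_G (Suc k) P, nu (2 * Suc k + 1) P)"
  let ?fH = "\<lambda>P. (alpha2_P_H (Suc k) P, nu (2 * Suc k) P)"
  let ?gG = "\<lambda>P. (alpha2_P_G k P, nu (2 * k + 1) P)"
  let ?gH = "\<lambda>P. (alpha2_P_H k P, nu (2 * k) P)"
  have rS: "r_snake (Suc k) = image_mset ?fG (mset_set {P. perfect_matching (Suc (Suc (Suc (2*k)))) P})"
    unfolding r_snake_def e1 ..
  have sS: "s_snake (Suc k) = image_mset ?fH (mset_set {P. perfect_matching (Suc (Suc (2*k))) P})"
    unfolding s_snake_def e2 ..
  have rk: "r_snake k = image_mset ?gG (mset_set {P. perfect_matching (Suc (2*k)) P})"
    unfolding r_snake_def e3 ..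
  have sk: "s_snake k = image_mset ?gH (mset_set {P. perfect_matching (2*k) P})"
    unfolding s_snake_def ..
  have fin: "\<And>m. finite {P. perfect_matching m P}" by (rule finite_pm)
  have partA: "qmult (r_snake n) X1 = qmult (qmult (qM 1 (0, 0, 0, 0)) (s_snake n)) Y1
                                 + qmult (r_snake (n - 1)) X2"
  proof -
    have L: "qmult (r_snake n) X1 =
       image_mset (\<lambda>P. mono_mult (?fG (insert (vert_edge (Suc (Suc (Suc (2*k))))) P)) (0, (1,0,0,0)))
          (mset_set {P. perfect_matching (Suc (Suc (2*k))) P})
     + image_mset (\<lambda>P. mono_mult (?fG (P \<union> {bot_edge (Suc (Suc (2*k))), top_edge (Suc (Suc (2*k)))})) (0, (1,0,0,0)))
          (mset_set {P. perfect_matching (Suc (2*k)) P})"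
      unfolding n X1_def qM_def qmult_single_r rS
      using mset_split[of "\<lambda>P. mono_mult (?fG P) (0, (1,0,0,0))" "Suc (2*k)"]
      by (simp add: multiset.map_comp comp_def)
    have R1: "qmult (qmult (qM 1 (0, 0, 0, 0)) (s_snake n)) Y1 =
       image_mset (\<lambda>P. mono_mult (mono_mult (1, (0,0,0,0)) (?fH P)) (0, (0,0,1,0)))
          (mset_set {P. perfect_matching (Suc (Suc (2*k))) P})"
      unfolding n Y1_def qM_def qmult_single_r qmult_single_l sS
      by (simp add: multiset.map_comp comp_def)
    have R2: "qmult (r_snake (n - 1)) X2 =
       image_mset (\<lambda>P. mono_mult (?gG P) (0, (0,1,0,0)))
          (mset_set {P. perfect_matching (Suc (2*k)) P})"
      unfolding nm X2_def qM_def qmult_single_r rk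
      by (simp add: multiset.map_comp comp_def)
    have c1: "image_mset (\<lambda>P. mono_mult (?fG (insert (vert_edge (Suc (Suc (Suc (2*k))))) P)) (0, (1,0,0,0)))
          (mset_set {P. perfect_matching (Suc (Suc (2*k))) P}) =
       image_mset (\<lambda>P. mono_mult (mono_mult (1, (0,0,0,0)) (?fH P)) (0, (0,0,1,0)))
          (mset_set {P. perfect_matching (Suc (Suc (2*k))) P})"
      by (rule image_mset_cong) (use pa_A fin in simp)
    have c2: "image_mset (\<lambda>P. mono_mult (?fG (P \<union> {bot_edge (Suc (Suc (2*k))), top_edge (Suc (Suc (2*k)))})) (0, (1,0,0,0)))
          (mset_set {P. perfect_matching (Suc (2*k)) P}) =
       image_mset (\<lambda>P. mono_mult (?gG P) (0, (0,1,0,0)))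
          (mset_set {P. perfect_matching (Suc (2*k)) P})"
      by (rule image_mset_cong) (use pa_B fin in simp)
    show ?thesis unfolding L R1 R2 c1 c2 ..
  qed
  have partB: "qmult X2 (s_snake n) = r_snake (n - 1)
                                 + qmult (qmult (qM (-1) (0, 0, 0, 0)) (qM 0 (1, 0, 1, 1))) (s_snake (n - 1))"
  proof -
    have L: "qmult X2 (s_snake n) =
       image_mset (\<lambda>P. mono_mult (0, (0,1,0,0)) (?fH (insert (vert_edge (Suc (Suc (2*k)))) P)))
          (mset_set {P. perfect_matching (Suc (2*k)) P})
     + image_mset (\<lambda>P. mono_mult (0, (0,1,0,0)) (?fH (P \<union> {bot_edge (Suc (2*k)), top_edge (Suc (2*k))})))
          (mset_set {P. perfect_matching (2*k) P})"
      unfolding n X2_def qM_def qmult_single_l sS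
      using mset_split[of "\<lambda>P. mono_mult (0, (0,1,0,0)) (?fH P)" "2*k"]
      by (simp add: multiset.map_comp comp_def)
    have R2: "qmult (qmult (qM (-1) (0, 0, 0, 0)) (qM 0 (1, 0, 1, 1))) (s_snake (n - 1)) =
       image_mset (\<lambda>P. mono_mult (mono_mult (-1, (0,0,0,0)) (0, (1,0,1,1))) (?gH P))
          (mset_set {P. perfect_matching (2*k) P})"
      unfolding nm qM_def qmult_single_l sk
      by (simp add: multiset.map_comp comp_def qmult_single_l)
    have c1: "image_mset (\<lambda>P. mono_mult (0, (0,1,0,0)) (?fH (insert (vert_edge (Suc (Suc (2*k)))) P)))
          (mset_set {P. perfect_matching (Suc (2*k)) P}) = r_snake (n - 1)"
      unfolding nm rk by (rule image_mset_cong) (use pb_A fin in simp)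
    have c2: "image_mset (\<lambda>P. mono_mult (0, (0,1,0,0)) (?fH (P \<union> {bot_edge (Suc (2*k)), top_edge (Suc (2*k))})))
          (mset_set {P. perfect_matching (2*k) P}) =
       image_mset (\<lambda>P. mono_mult (mono_mult (-1, (0,0,0,0)) (0, (1,0,1,1))) (?gH P))
          (mset_set {P. perfect_matching (2*k) P})"
      by (rule image_mset_cong) (use pb_B fin in simp)
    show ?thesis unfolding L R2 c1 c2 ..
  qed
  show ?thesis using partA partB by blast
qed

end
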